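(* If an infinite word $w$ is abelian-square rich and linearly recurrent, then it is uniformly abelian-square rich.
   Context: For a word $u$ over $\Sigma=\{a_1,\dots,a_\sigma\}$, its Parikh vector is $P(u)=(|u|_{a_1},\dots,|u|_{a_\sigma})$, where $|u|_a$ counts occurrences of $a$. An abelian square is a word $v_1v_2$ with $P(v_1)=P(v_2)$. The factor complexity $p_w(n)$ is the number of distinct factors of $w$ of length $n$. The recurrence index $R_w(n)$ is the least $m$ such that every factor of $w$ of length $m$ contains all factors of $w$ of length $n$; $w$ is linearly recurrent if $R_w(n)$ is defined for all $n$ and $R_w(n)/n$ is bounded. An infinite word $w$ is abelian-square rich if there is a constant $C>0$ such that for all sufficiently large $n$, $\frac{1}{p_w(n)}\sum_{v}(\text{number of distinct abelian square factors of } v)\geq Cn^2$, the sum over factors $v$ of $w$ of length $n$. It is uniformly abelian-square rich if there is a constant $C>0$ such that for all sufficiently large $n$, every factor $v$ of $w$ of length $n$ has at least $Cn^2$ distinct abelian square factors (i.e., the infimum over such $v$ is $\geq Cn^2$). *)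

theory Defs
  imports Complex_Main "HOL-Library.Sublist"
begin

definition parikh :: "'a list \<Rightarrow> 'a \<Rightarrow> nat" where
  "parikh u = (\<lambda>a. count_list u a)"

definition abelian_square :: "'a list \<Rightarrow> bool" where
  "abelian_square u \<longleftrightarrow> (\<exists>v1 v2. u = v1 @ v2 \<and> v1 \<noteq> [] \<and> parikh v1 = parikh v2)"

definition factor_at :: "(nat \<Rightarrow> 'a) \<Rightarrow> nat \<Rightarrow> nat \<Rightarrow> 'a list" where
  "factor_at w i n = map w [i..<i+n]"

definition factors :: "(nat \<Rightarrow> 'a) \<Rightarrow> nat \<Rightarrow> 'a list set" where
  "factors w n = {factor_at w i n | i. True}"

definition complexity :: "(nat \<Rightarrow> 'a) \<Rightarrow> nat \<Rightarrow> nat" where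
  "complexity w n = card (factors w n)"

definition num_abelian_squares :: "'a list \<Rightarrow> nat" where
  "num_abelian_squares v = card {u. sublist u v \<and> abelian_square u}"

definition recurrence_ok :: "(nat \<Rightarrow> 'a) \<Rightarrow> nat \<Rightarrow> nat \<Rightarrow> bool" where
  "recurrence_ok w n m \<longleftrightarrow> (\<forall>u\<in>factors w m. \<forall>x\<in>factors w n. sublist x u)"

definition recurrence_index :: "(nat \<Rightarrow> 'a) \<Rightarrow> nat \<Rightarrow> nat" where
  "recurrence_index w n = (LEAST m. recurrence_ok w n m)"

definition linearly_recurrent :: "(nat \<Rightarrow> 'a) \<Rightarrow> bool" where
  "linearly_recurrent w \<longleftrightarrow>
     (\<forall>n. \<exists>m. recurrence_ok w n m) \<and>
     (\<exists>K::real. \<forall>n\<ge>1. real (recurrence_index w n) / real n \<le> K)"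

definition abelian_square_rich :: "(nat \<Rightarrow> 'a) \<Rightarrow> bool" where
  "abelian_square_rich w \<longleftrightarrow>
     (\<exists>C::real. C > 0 \<and> (\<forall>\<^sub>F n in sequentially.
        (1 / real (complexity w n)) * (\<Sum>v\<in>factors w n. real (num_abelian_squares v))
          \<ge> C * real n ^ 2))"

definition uniformly_abelian_square_rich :: "(nat \<Rightarrow> 'a) \<Rightarrow> bool" where
  "uniformly_abelian_square_rich w \<longleftrightarrow>
     (\<exists>C::real. C > 0 \<and> (\<forall>\<^sub>F n in sequentially.
        \<forall>v\<in>factors w n. real (num_abelian_squares v) \<ge> C * real n ^ 2))"

end

theory Submission
  imports Defs
begin

lemma num_as_mono:
  assumes "sublist u v"
  shows "num_abelian_squares u \<le> num_abelian_squares v"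
  unfolding num_abelian_squares_def
proof (rule card_mono)
  show "finite {u. sublist u v \<and> abelian_square u}"
    by (rule finite_subset[of _ "set (sublists v)"]) auto
  show "{x. sublist x u \<and> abelian_square x} \<subseteq> {u. sublist u v \<and> abelian_square u}"
    using assms sublist_order.order.trans by blast
qed

lemma factor_prefix:
  assumes "m \<le> m'"
  shows "sublist (factor_at w i m) (factor_at w i m')"
proof -
  have "[i..<i+m'] = [i..<i+m] @ [i+m..<i+m']"
    using assms upt_add_eq_append[of i "i+m" "m'-m"] by simp
  then have "factor_at w i m' = factor_at w i m @ map w [i+m..<i+m']"
    by (simp add: factor_at_def)
  then show ?thesis by (metis prefixI prefix_imp_sublist)
qed

lemma rec_mono:
  assumes "recurrence_ok w n m" "m \<le> m'"
  shows "recurrence_ok w n m'"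
  unfolding recurrence_ok_def
proof (intro ballI)
  fix u x assume u: "u \<in> factors w m'" and x: "x \<in> factors w n"
  obtain i where ui: "u = factor_at w i m'" using u by (auto simp: factors_def)
  have "factor_at w i m \<in> factors w m" by (auto simp: factors_def)
  then have "sublist x (factor_at w i m)" using assms(1) x by (auto simp: recurrence_ok_def)
  then show "sublist x u" using factor_prefix[OF assms(2), of w i] ui
    using sublist_order.order.trans by blast
qed

lemma avg_exists:
  fixes f :: "'b \<Rightarrow> real"
  assumes "(1 / real (card F)) * (\<Sum>v\<in>F. f v) \<ge> c" "c > 0"
  shows "\<exists>v\<in>F. f v \<ge> c"
proof (rule ccontr)
  assume H: "\<not> ?thesis"
  show False
  proof (cases "card F = 0")
    case True then show False using assms by simp
  next
    case False
    then have fin: "finite F" and ne: "F \<noteq> {}" using card_gt_0_iff by blast+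
    have "(\<Sum>v\<in>F. f v) < (\<Sum>v\<in>F. c)"
      using H by (intro sum_strict_mono[OF fin ne]) auto
    then have "(\<Sum>v\<in>F. f v) < real (card F) * c" by simp
    then have "(1 / real (card F)) * (\<Sum>v\<in>F. f v) < c"
      using False by (simp add: field_simps)
    then show False using assms by simp
  qed
qed

theorem lemma2:
  fixes w :: "nat \<Rightarrow> 'a"
  assumes "abelian_square_rich w" and "linearly_recurrent w"
  shows "uniformly_abelian_square_rich w"
proof -
  obtain C where C0: "C > 0" and ev: "\<forall>\<^sub>F n in sequentially.
        (1 / real (complexity w n)) * (\<Sum>v\<in>factors w n. real (num_abelian_squares v))
          \<ge> C * real n ^ 2"
    using assms(1) unfolding abelian_square_rich_def by blast
  obtain N where N: "\<And>n. n \<ge> N \<Longrightarrow> (1 / real (complexity w n)) * (\<Sum>v\<in>factors w n. real (num_abelian_squares v))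
          \<ge> C * real n ^ 2"
    using ev unfolding eventually_sequentially by blast
  obtain K :: real where ex: "\<And>n. \<exists>m. recurrence_ok w n m"
    and K: "\<And>n. n \<ge> 1 \<Longrightarrow> real (recurrence_index w n) / real n \<le> K"
    using assms(2) unfolding linearly_recurrent_def by blast
  define k :: nat where "k = nat (ceiling K) + 1"
  have k1: "k \<ge> 1" by (simp add: k_def)
  have Kk: "K \<le> real k" unfolding k_def by linarith
  define D where "D = C / (4 * real k ^ 2)"
  have D0: "D > 0" using C0 k1 by (simp add: D_def)
  show ?thesis
    unfolding uniformly_abelian_square_rich_def
  proof (rule exI[of _ D], intro conjI D0, unfold eventually_sequentially,
      rule exI[of _ "k * (N + 2)"], intro allI impI ballI)
    fix n v
    assume n: "k * (N + 2) \<le> n" and v: "v \<in> factors w n"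
    define n' where "n' = n div k"
    have n'N: "n' \<ge> N + 2"
      proof -
      have "(k * (N + 2)) div k \<le> n div k" using n by (rule div_le_mono)
      then show ?thesis using k1 unfolding n'_def by simp
    qed
    have n'1: "n' \<ge> 1" using n'N by simp
    have kn': "k * n' \<le> n" unfolding n'_def by simp
    have nlt: "n < k * (n' + 1)" unfolding n'_def using k1
      by (simp add: dividend_less_times_div)
    have "real (recurrence_index w n') \<le> K * real n'"
      using K[OF n'1] n'1 by (simp add: divide_le_eq)
    also have "\<dots> \<le> real k * real n'" using Kk by (simp add: mult_right_mono)
    also have "\<dots> \<le> real n" using kn' by (simp only: of_nat_mult[symmetric] of_nat_le_iff)
    finally have Rle: "recurrence_index w n' \<le> n" by (simp only: of_nat_le_iff)
    have "recurrence_ok w n' (recurrence_index w n')"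
      unfolding recurrence_index_def using ex by (rule LeastI_ex)
    then have rok: "recurrence_ok w n' n" using rec_mono Rle by blast
    have Cpos: "C * real n' ^ 2 > 0" using C0 n'1 by simp
    obtain u where u: "u \<in> factors w n'" and uC: "real (num_abelian_squares u) \<ge> C * real n' ^ 2"
      using avg_exists[OF N[of n', unfolded complexity_def] Cpos] n'N by auto
    have "sublist u v" using rok u v by (auto simp: recurrence_ok_def)
    then have "real (num_abelian_squares u) \<le> real (num_abelian_squares v)"
      using num_as_mono by simp
    moreover have "D * real n ^ 2 \<le> C * real n' ^ 2"
    proof -
      have "real n < real (k * (n' + 1))" using nlt by (simp only: of_nat_less_iff)
      also have "\<dots> = real k * (real n' + 1)" by (simp add: algebra_simps)
      also have "\<dots> \<le> real k * (2 * real n')" using n'1 k1 by simp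
      finally have a: "real n \<le> 2 * real k * real n'" by simp
      have "real n ^ 2 \<le> (2 * real k * real n') ^ 2"
        using a by (intro power_mono) auto
      then have "real n ^ 2 \<le> 4 * real k ^ 2 * real n' ^ 2" by (simp add: power_mult_distrib)
      then have "C * real n ^ 2 \<le> C * (4 * real k ^ 2 * real n' ^ 2)"
        using C0 by simp
      then show ?thesis unfolding D_def using k1 by (simp add: field_simps)
    qed
    ultimately show "D * real n ^ 2 \<le> real (num_abelian_squares v)" using uC by linarith
  qed
qed

end
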